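(* Let $A,B\in\mathbb{C}^{m\times n}$. The following are equivalent: (a) $A\le^{\diamond}B$; (b) $\mathcal{R}(B^* )=\mathcal{R}(A^* )\oplus\mathcal{R}(B^\dagger-A^\dagger)$ (direct sum); (c) $\mathcal{R}(A^* )\cap\mathcal{R}(B^\dagger-A^\dagger)=\{0\}$ and $\mathcal{R}(A^* )\subseteq\mathcal{R}(B^* )$.
   Context: For a matrix $M$, $M^*$ is its conjugate transpose, $M^\dagger$ its Moore–Penrose inverse, $\mathcal{R}(M)$ its column space. Diamond partial order: for $A,B\in\mathbb{C}^{m\times n}$, $A\le^{\diamond}B$ means $\mathcal{R}(A)\subseteq\mathcal{R}(B)$, $\mathcal{R}(A^* )\subseteq\mathcal{R}(B^* )$, and $AB^*A=AA^*A$. *)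

theory Defs
  imports "HOL-Analysis.Analysis"
begin

text \<open>Complex m x n matrices are modelled as complex ^'n ^'m (m rows, n columns).\<close>

definition conj_transpose :: "complex ^'n ^'m \<Rightarrow> complex ^'m ^'n" where
  "conj_transpose A = (\<chi> i j. cnj (A $ j $ i))"

definition col_space :: "complex ^'n ^'m \<Rightarrow> (complex ^'m) set" where
  "col_space A = range (\<lambda>x. A *v x)"

definition mp_inverse :: "complex ^'n ^'m \<Rightarrow> complex ^'m ^'n" where
  "mp_inverse A = (THE X. A ** X ** A = A \<and> X ** A ** X = X \<and>
      conj_transpose (A ** X) = A ** X \<and> conj_transpose (X ** A) = X ** A)"

definition diamond_le :: "complex ^'n ^'m \<Rightarrow> complex ^'n ^'m \<Rightarrow> bool" where
  "diamond_le A B \<longleftrightarrow> col_space A \<subseteq> col_space B \<and>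
     col_space (conj_transpose A) \<subseteq> col_space (conj_transpose B) \<and>
     A ** conj_transpose B ** A = A ** conj_transpose A ** A"

definition is_direct_sum :: "'a::ab_group_add set \<Rightarrow> 'a set \<Rightarrow> 'a set \<Rightarrow> bool" where
  "is_direct_sum W U V \<longleftrightarrow> W = {u + v | u v. u \<in> U \<and> v \<in> V} \<and> U \<inter> V = {0}"

end

theory Submission
  imports Defs
begin

abbreviation ct :: "complex ^'n ^'m \<Rightarrow> complex ^'m ^'n" where "ct \<equiv> conj_transpose"

lemma ct_ct[simp]: "ct (ct A) = A"
  by (simp add: conj_transpose_def vec_eq_iff)

lemma ct_mult: "ct (A ** B) = ct B ** ct A"
  by (simp add: conj_transpose_def matrix_matrix_mult_def vec_eq_iff mult.commute)

lemma ct_diff: "ct (A - B) = ct A - ct B"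
  by (simp add: conj_transpose_def vec_eq_iff)

lemma ct_zero[simp]: "ct 0 = 0"
  by (simp add: conj_transpose_def vec_eq_iff)

lemma NN0:
  fixes N :: "complex^'n^'m"
  assumes "ct N ** N = 0" shows "N = 0"
proof -
  have "\<forall>i j. N $ i $ j = 0"
  proof (intro allI)
    fix i j
    have "(ct N ** N) $ j $ j = 0" using assms by simp
    hence "(\<Sum>k\<in>UNIV. cnj (N$k$j) * N$k$j) = 0"
      by (simp add: conj_transpose_def matrix_matrix_mult_def)
    moreover have "complex_of_real (\<Sum>k\<in>UNIV. (cmod (N$k$j))\<^sup>2) = (\<Sum>k\<in>UNIV. cnj (N$k$j) * N$k$j)"
      unfolding of_real_sum by (intro sum.cong refl) (simp only: complex_norm_square mult.commute)
    ultimately have "(\<Sum>k\<in>UNIV. (cmod (N$k$j))\<^sup>2) = 0"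
      by (metis of_real_eq_0_iff)
    hence "\<forall>k\<in>UNIV. (cmod (N$k$j))\<^sup>2 = 0"
      by (subst sum_nonneg_eq_0_iff[symmetric]) auto
    thus "N $ i $ j = 0" by simp
  qed
  thus ?thesis by (simp add: vec_eq_iff)
qed

lemma mv_scaleR: "(M::complex^'n^'m) *v (c *\<^sub>R u) = c *\<^sub>R (M *v u)"
  by (simp add: matrix_vector_mult_def vec_eq_iff scaleR_sum_right)

lemma solv_vec:
  fixes M :: "complex^'n^'m" and b :: "complex^'m"
  shows "\<exists>u. ct M *v b = ct M *v (M *v u)"
proof -
  let ?S = "range (\<lambda>u. M *v u)"
  have sub: "subspace ?S"
    unfolding subspace_def
  proof (intro conjI ballI allI)
    show "0 \<in> ?S" by (metis matrix_vector_mult_0_right rangeI)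
  next
    fix x y assume "x \<in> ?S" "y \<in> ?S"
    then obtain a b where "x = M *v a" "y = M *v b" by auto
    thus "x + y \<in> ?S" by (metis matrix_vector_right_distrib rangeI)
  next
    fix c x assume "x \<in> ?S"
    then obtain a where "x = M *v a" by auto
    thus "c *\<^sub>R x \<in> ?S" by (metis mv_scaleR rangeI)
  qed
  obtain y z where y: "y \<in> span ?S" and z: "\<And>w. w \<in> span ?S \<Longrightarrow> orthogonal z w"
      and b: "b = y + z"
    using orthogonal_subspace_decomp_exists by blast
  have sp: "span ?S = ?S" using sub by (simp only: span_eq_iff)
  from y sp obtain u where u: "y = M *v u" by auto
  have zo: "\<And>v. inner z (M *v v) = 0"
    using z sp by (auto simp: orthogonal_def)
  have "ct M *v z = 0"
  proof -
    have "(ct M *v z) $ j = 0" for j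
    proof -
      define s where "s = (\<Sum>i\<in>UNIV. cnj (z$i) * M$i$j)"
      have e: "inner z (M *v axis j c) = Re (c * s)" for c
        by (simp add: inner_vec_def matrix_vector_mult_def axis_def s_def inner_complex_def
              sum_distrib_left Re_sum if_distrib cong: if_cong) (simp add: algebra_simps)
      have "Re s = 0" using e[of 1] zo by simp
      moreover have "Im s = 0" using e[of \<i>] zo by simp
      ultimately have "s = 0" by (simp add: complex_eq_iff)
      moreover have "(ct M *v z) $ j = cnj s"
        by (simp add: s_def conj_transpose_def matrix_vector_mult_def mult.commute)
      ultimately show ?thesis by simp
    qed
    thus ?thesis by (simp add: vec_eq_iff)
  qed
  thus ?thesis using b u by (auto simp: matrix_vector_right_distrib)
qed

lemma mm_col: "((P::complex^'k^'m) ** G) $ i $ j = (P *v (\<chi> k. G$k$j)) $ i"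
  by (simp add: matrix_matrix_mult_def matrix_vector_mult_def)

lemma mv_axis: "((P::complex^'k^'m) *v axis j 1) $ i = P$i$j"
  by (simp add: matrix_vector_mult_def axis_def if_distrib cong: if_cong)

lemma solv:
  fixes M :: "complex^'n^'m"
  shows "\<exists>G::complex^'m^'n. ct M ** M ** G = ct M"
proof -
  have "\<forall>j. \<exists>u. ct M *v axis j 1 = ct M *v (M *v u)" using solv_vec by blast
  then obtain u where u: "\<And>j. ct M *v axis j 1 = ct M *v (M *v u j)" by metis
  define G :: "complex^'m^'n" where "G = (\<chi> i j. u j $ i)"
  have "(ct M ** M ** G) $ i $ j = ct M $ i $ j" for i j
  proof -
    have "(ct M ** M ** G) $ i $ j = ((ct M ** M) *v u j) $ i"
      by (simp add: mm_col G_def)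
    also have "\<dots> = (ct M *v axis j 1) $ i" by (simp add: u matrix_vector_mul_assoc)
    also have "\<dots> = ct M $ i $ j" by (simp add: mv_axis)
    finally show ?thesis .
  qed
  thus ?thesis by (auto simp: vec_eq_iff)
qed

lemma mm_diff_l: "(A::complex^'k^'m) ** (B - C) = A ** B - A ** C"
  by (simp add: matrix_matrix_mult_def vec_eq_iff sum_subtractf algebra_simps)

lemma mm_diff_r: "((A::complex^'k^'m) - B) ** C = A ** C - B ** C"
  by (simp add: matrix_matrix_mult_def vec_eq_iff sum_subtractf algebra_simps)

lemma gen13:
  fixes M :: "complex^'n^'m"
  assumes G: "ct M ** M ** G = ct M"
  shows "M ** G ** M = M" "ct (M ** G) = M ** G"
proof -
  have "ct (M ** G) = ct G ** (ct M ** M ** G)" by (simp add: G ct_mult)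
  also have "\<dots> = ct (M ** G) ** (M ** G)" by (simp add: ct_mult matrix_mul_assoc)
  finally have h: "ct (M ** G) = ct (M ** G) ** (M ** G)" .
  have "M ** G = ct (ct (M ** G))" by simp
  also have "\<dots> = ct (M ** G) ** (M ** G)" by (subst h) (simp add: ct_mult)
  also have "\<dots> = ct (M ** G)" using h by simp
  finally show "ct (M ** G) = M ** G" by simp
  define K where "K = G ** M - mat 1"
  have "ct M ** M ** K = 0"
    by (simp add: K_def mm_diff_l matrix_mul_assoc G)
  hence "ct (M ** K) ** (M ** K) = 0"
    by (metis ct_mult matrix_mul_assoc times0_right)
  hence "M ** K = 0" by (rule NN0)
  thus "M ** G ** M = M" by (simp add: K_def mm_diff_l matrix_mul_assoc)
qed

definition penrose :: "complex^'n^'m \<Rightarrow> complex^'m^'n \<Rightarrow> bool" where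
  "penrose A X \<longleftrightarrow> A ** X ** A = A \<and> X ** A ** X = X \<and>
      conj_transpose (A ** X) = A ** X \<and> conj_transpose (X ** A) = X ** A"

lemma mp_exists:
  fixes A :: "complex^'n^'m"
  shows "\<exists>X. penrose A X"
proof -
  obtain G :: "complex^'m^'n" where G: "ct A ** A ** G = ct A" using solv by blast
  obtain H :: "complex^'n^'m" where H: "ct (ct A) ** ct A ** H = ct (ct A)" using solv by blast
  have AGA: "A ** G ** A = A" and AG: "ct (A ** G) = A ** G" using gen13[OF G] by auto
  have h1: "ct A ** H ** ct A = ct A" and h2: "ct (ct A ** H) = ct A ** H" using gen13[OF H] by auto
  define L where "L = ct H"
  have ALA: "A ** L ** A = A"
  proof -
    have "A ** L ** A = ct (ct A ** H ** ct A)" by (simp add: L_def ct_mult matrix_mul_assoc)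
    thus ?thesis using h1 by simp
  qed
  have LA: "ct (L ** A) = L ** A"
    by (metis L_def ct_ct ct_mult h2)
  have AGA': "Y ** A ** G ** A = Y ** A" for Y :: "complex^'m^'k"
    by (metis AGA matrix_mul_assoc)
  have ALA': "Y ** A ** L ** A = Y ** A" for Y :: "complex^'m^'k"
    by (metis ALA matrix_mul_assoc)
  define X where "X = L ** A ** G"
  have "A ** X ** A = A" unfolding X_def by (simp add: matrix_mul_assoc ALA AGA)
  moreover have "X ** A ** X = X" unfolding X_def by (simp add: matrix_mul_assoc AGA' ALA')
  moreover have "ct (A ** X) = A ** X" unfolding X_def by (simp add: matrix_mul_assoc ALA AG)
  moreover have "ct (X ** A) = X ** A" unfolding X_def by (simp add: matrix_mul_assoc AGA' LA)
  ultimately show ?thesis unfolding penrose_def by blast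
qed

lemma mp_unique:
  fixes A :: "complex^'n^'m"
  assumes X: "penrose A X" and Y: "penrose A Y"
  shows "X = Y"
proof -
  from X have x1: "A ** X ** A = A" and x2: "X ** A ** X = X" and x3: "ct (A ** X) = A ** X"
     and x4: "ct (X ** A) = X ** A" by (auto simp: penrose_def)
  from Y have y1: "A ** Y ** A = A" and y2: "Y ** A ** Y = Y" and y3: "ct (A ** Y) = A ** Y"
     and y4: "ct (Y ** A) = Y ** A" by (auto simp: penrose_def)
  have "X = X ** (A ** X)" using x2 by (simp add: matrix_mul_assoc)
  also have "\<dots> = X ** ct X ** ct A" by (subst x3[symmetric]) (simp add: ct_mult matrix_mul_assoc)
  also have "\<dots> = X ** ct X ** ct (A ** Y ** A)" using y1 by simp
  also have "\<dots> = X ** ct (A ** X) ** ct (A ** Y)" by (simp add: ct_mult matrix_mul_assoc)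
  also have "\<dots> = X ** (A ** X) ** (A ** Y)" using x3 y3 by simp
  also have "\<dots> = (X ** A ** X) ** A ** Y" by (simp add: matrix_mul_assoc)
  also have "\<dots> = X ** A ** Y" using x2 by simp
  finally have e1: "X = X ** A ** Y" .
  have "Y = (Y ** A) ** Y" using y2 by (simp add: matrix_mul_assoc)
  also have "\<dots> = ct A ** ct Y ** Y" by (subst y4[symmetric]) (simp add: ct_mult matrix_mul_assoc)
  also have "\<dots> = ct (A ** X ** A) ** ct Y ** Y" using x1 by simp
  also have "\<dots> = ct (X ** A) ** ct (Y ** A) ** Y" by (simp add: ct_mult matrix_mul_assoc)
  also have "\<dots> = (X ** A) ** (Y ** A) ** Y" using x4 y4 by simp
  also have "\<dots> = X ** A ** (Y ** A ** Y)" by (simp add: matrix_mul_assoc)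
  also have "\<dots> = X ** A ** Y" using y2 by simp
  finally show ?thesis using e1 by simp
qed

lemma mp_pen: "penrose A (mp_inverse A)"
proof -
  obtain X where X: "penrose A X" using mp_exists by blast
  have "penrose A (THE X. penrose A X)"
    by (rule theI[of "penrose A" X]) (use X mp_unique in auto)
  thus ?thesis unfolding mp_inverse_def penrose_def by simp
qed

lemma cs_sub: "(M::complex^'k^'m) = N ** K \<Longrightarrow> col_space M \<subseteq> col_space N"
  unfolding col_space_def by (auto simp: matrix_vector_mul_assoc[symmetric])

lemma pen_ids:
  fixes A :: "complex^'n^'m"
  assumes "penrose A C"
  shows "C = C ** ct C ** ct A" "C = ct A ** ct C ** C" "ct A = C ** A ** ct A"
    "ct A = ct A ** A ** C" "A = A ** ct A ** ct C" "A = ct C ** ct A ** A"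
    "A ** C ** A = A" "C ** A ** C = C" "ct (A ** C) = A ** C" "ct (C ** A) = C ** A"
proof -
  from assms have x1: "A ** C ** A = A" and x2: "C ** A ** C = C" and x3: "ct (A ** C) = A ** C"
     and x4: "ct (C ** A) = C ** A" by (auto simp: penrose_def)
  show "A ** C ** A = A" "C ** A ** C = C" "ct (A ** C) = A ** C" "ct (C ** A) = C ** A"
    using x1 x2 x3 x4 by auto
  have "C ** ct C ** ct A = C ** ct (A ** C)" by (simp only: ct_mult matrix_mul_assoc)
  also have "\<dots> = C ** (A ** C)" by (simp only: x3)
  also have "\<dots> = C" by (simp only: matrix_mul_assoc x2)
  finally show "C = C ** ct C ** ct A" by (rule sym)
  have "ct A ** ct C ** C = ct (C ** A) ** C" by (simp only: ct_mult)
  also have "\<dots> = C" by (simp only: x4 x2)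
  finally show "C = ct A ** ct C ** C" by (rule sym)
  have "C ** A ** ct A = ct (C ** A) ** ct A" by (simp only: x4)
  also have "\<dots> = ct (A ** (C ** A))" by (simp only: ct_mult matrix_mul_assoc)
  also have "\<dots> = ct A" by (simp only: matrix_mul_assoc x1)
  finally show "ct A = C ** A ** ct A" by (rule sym)
  have "ct A ** A ** C = ct A ** ct (A ** C)" by (simp only: x3 matrix_mul_assoc)
  also have "\<dots> = ct (A ** C ** A)" by (simp only: ct_mult matrix_mul_assoc)
  also have "\<dots> = ct A" by (simp only: x1)
  finally show "ct A = ct A ** A ** C" by (rule sym)
  have "A ** ct A ** ct C = A ** ct (C ** A)" by (simp only: ct_mult matrix_mul_assoc)
  also have "\<dots> = A ** (C ** A)" by (simp only: x4)
  also have "\<dots> = A" by (simp only: matrix_mul_assoc x1)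
  finally show "A = A ** ct A ** ct C" by (rule sym)
  have "ct C ** ct A ** A = ct (A ** C) ** A" by (simp only: ct_mult)
  also have "\<dots> = A" by (simp only: x3 x1)
  finally show "A = ct C ** ct A ** A" by (rule sym)
qed

lemma third_iff:
  fixes A B :: "complex^'n^'m"
  assumes "penrose A C"
  shows "A ** ct B ** A = A ** ct A ** A \<longleftrightarrow> C ** B ** C = C"
proof -
  note p = pen_ids[OF assms]
  show ?thesis
  proof
    assume h: "A ** ct B ** A = A ** ct A ** A"
    have "ct A ** B ** ct A = ct (A ** ct B ** A)" by (simp add: ct_mult matrix_mul_assoc)
    also have "\<dots> = ct A ** A ** ct A" using h by (simp add: ct_mult matrix_mul_assoc)
    finally have h': "ct A ** B ** ct A = ct A ** A ** ct A" .
    have "C ** B ** C = (C ** ct C ** ct A) ** B ** (ct A ** ct C ** C)"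
      by (simp only: p(1)[symmetric] p(2)[symmetric])
    also have "\<dots> = C ** ct C ** (ct A ** B ** ct A) ** ct C ** C"
      by (simp only: matrix_mul_assoc)
    also have "\<dots> = C ** ct C ** (ct A ** A ** ct A) ** ct C ** C" by (simp only: h')
    also have "\<dots> = (C ** ct C ** ct A) ** A ** (ct A ** ct C ** C)"
      by (simp only: matrix_mul_assoc)
    also have "\<dots> = C" by (simp only: p(1)[symmetric] p(2)[symmetric] p(8))
    finally show "C ** B ** C = C" .
  next
    assume h: "C ** B ** C = C"
    have "A ** ct B ** A = (A ** ct A ** ct C) ** ct B ** (ct C ** ct A ** A)"
      by (simp only: p(5)[symmetric] p(6)[symmetric])
    also have "\<dots> = A ** ct A ** ct (C ** B ** C) ** ct A ** A"
      by (simp only: matrix_mul_assoc ct_mult)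
    also have "\<dots> = (A ** ct A ** ct C) ** ct A ** A" by (simp only: h matrix_mul_assoc)
    also have "\<dots> = A ** ct A ** A" by (simp only: p(5)[symmetric])
    finally show "A ** ct B ** A = A ** ct A ** A" .
  qed
qed

lemma range_iff:
  fixes A B :: "complex^'n^'m"
  assumes pA: "penrose A C" and pB: "penrose B D"
  shows "col_space A \<subseteq> col_space B \<longleftrightarrow> (\<forall>y. D *v y = 0 \<longrightarrow> C *v y = 0)"
proof -
  note p = pen_ids[OF pA] and q = pen_ids[OF pB]
  have ctBD: "ct (B ** D) = B ** D" using q by simp
  show ?thesis
  proof
    assume h: "col_space A \<subseteq> col_space B"
    have "A = B ** D ** A"
    proof (subst matrix_eq, intro allI)
      fix x
      from h obtain w where w: "A *v x = B *v w" unfolding col_space_def by blast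
      have "(B ** D ** A) *v x = (B ** D ** B) *v w"
        by (simp add: w matrix_vector_mul_assoc[symmetric])
      thus "A *v x = (B ** D ** A) *v x" using q(7) w by simp
    qed
    hence "ct A = ct A ** (B ** D)" by (metis ct_mult ctBD)
    show "\<forall>y. D *v y = 0 \<longrightarrow> C *v y = 0"
    proof (intro allI impI)
      fix y assume "D *v y = 0"
      have "C *v y = (C ** ct C) *v (ct A *v y)"
        by (metis p(1) matrix_vector_mul_assoc)
      also have "ct A *v y = (ct A ** B) *v (D *v y)"
        by (metis \<open>ct A = ct A ** (B ** D)\<close> matrix_vector_mul_assoc)
      finally show "C *v y = 0" using \<open>D *v y = 0\<close> by simp
    qed
  next
    assume h: "\<forall>y. D *v y = 0 \<longrightarrow> C *v y = 0"
    define K where "K = A - B ** D ** A"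
    have DK: "D ** K = 0"
      by (simp add: K_def mm_diff_l matrix_mul_assoc q(8))
    have CK: "C ** K = 0"
    proof (subst matrix_eq, intro allI)
      fix x
      have "D *v (K *v x) = 0" by (simp add: matrix_vector_mul_assoc DK)
      hence "C *v (K *v x) = 0" using h by blast
      thus "(C ** K) *v x = 0 *v x" by (simp add: matrix_vector_mul_assoc)
    qed
    have AK: "ct A ** K = 0"
      by (metis p(4) CK matrix_mul_assoc times0_right)
    have "ct (B ** D ** A) = ct A ** (B ** D)" by (metis ct_mult ctBD)
    hence BK: "ct (B ** D ** A) ** K = 0"
      by (metis DK matrix_mul_assoc times0_right)
    have "ct K ** K = 0" unfolding K_def
      by (simp only: ct_diff mm_diff_r AK[unfolded K_def] BK[unfolded K_def]) simp
    hence "K = 0" by (rule NN0)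
    hence eq: "A = B ** (D ** A)" by (simp add: K_def matrix_mul_assoc)
    show "col_space A \<subseteq> col_space B" by (rule cs_sub[OF eq])
  qed
qed

lemma core:
  fixes C D :: "complex^'m^'n" and B :: "complex^'n^'m"
  assumes DBD: "D ** B ** D = D"
  shows "((\<forall>y. D *v y = 0 \<longrightarrow> C *v y = 0) \<and> col_space C \<subseteq> col_space D \<and> C ** B ** C = C)
     \<longleftrightarrow> (col_space C \<inter> col_space (D - C) = {0} \<and> col_space C \<subseteq> col_space D)"
proof
  assume "(\<forall>y. D *v y = 0 \<longrightarrow> C *v y = 0) \<and> col_space C \<subseteq> col_space D \<and> C ** B ** C = C"
  hence N: "\<And>y. D *v y = 0 \<Longrightarrow> C *v y = 0" and R: "col_space C \<subseteq> col_space D"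
    and CBC: "C ** B ** C = C" by auto
  have CBD: "C *v (B *v (D *v v)) = C *v v" for v
  proof -
    have "D *v (v - B *v (D *v v)) = 0"
      using DBD by (simp add: matrix_vector_mult_diff_distrib matrix_vector_mul_assoc matrix_mul_assoc)
    hence "C *v (v - B *v (D *v v)) = 0" by (rule N)
    thus ?thesis by (simp add: matrix_vector_mult_diff_distrib)
  qed
  have "col_space C \<inter> col_space (D - C) \<subseteq> {0}"
  proof
    fix x assume "x \<in> col_space C \<inter> col_space (D - C)"
    hence "x \<in> col_space C" "x \<in> col_space (D - C)" by auto
    then obtain u v where u: "x = C *v u" and v: "x = (D - C) *v v" unfolding col_space_def by blast
    have "C *v (B *v x) = x" using u CBC by (simp add: matrix_vector_mul_assoc matrix_mul_assoc)
    moreover have "C *v (B *v x) = C *v v - C *v (B *v (C *v v))"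
      using v by (simp add: matrix_vector_mult_diff_rdistrib matrix_vector_mult_diff_distrib CBD)
    moreover have "C *v (B *v (C *v v)) = C *v v" using CBC by (simp add: matrix_vector_mul_assoc matrix_mul_assoc)
    ultimately show "x \<in> {0}" by simp
  qed
  moreover have "0 \<in> col_space C \<inter> col_space (D - C)"
    unfolding col_space_def by (auto intro: range_eqI[of _ _ 0])
  ultimately show "col_space C \<inter> col_space (D - C) = {0} \<and> col_space C \<subseteq> col_space D"
    using R by blast
next
  assume "col_space C \<inter> col_space (D - C) = {0} \<and> col_space C \<subseteq> col_space D"
  hence I: "\<And>x. x \<in> col_space C \<Longrightarrow> x \<in> col_space (D - C) \<Longrightarrow> x = 0"
    and R: "col_space C \<subseteq> col_space D" by auto
  have N: "C *v y = 0" if "D *v y = 0" for y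
  proof -
    have "C *v y \<in> col_space (D - C)" unfolding col_space_def
      by (rule range_eqI[of _ _ "- y"]) (simp add: matrix_vector_mult_diff_rdistrib that
            matrix_vector_mult_diff_distrib[of _ 0, simplified])
    thus ?thesis using I unfolding col_space_def by blast
  qed
  have "C ** B ** C = C"
  proof (subst matrix_eq, intro allI)
    fix z
    obtain t where t: "C *v z = D *v t" using R unfolding col_space_def by blast
    define w where "w = B *v (C *v z)"
    have Dw: "D *v w = C *v z" unfolding w_def t
      using DBD by (simp add: matrix_vector_mul_assoc matrix_mul_assoc)
    have "C *v z - C *v w = (D - C) *v w" by (simp add: Dw matrix_vector_mult_diff_rdistrib)
    moreover have "C *v z - C *v w = C *v (z - w)" by (simp add: matrix_vector_mult_diff_distrib)
    ultimately have "C *v z - C *v w = 0"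
      using I unfolding col_space_def by (metis rangeI)
    thus "(C ** B ** C) *v z = C *v z"
      by (simp add: w_def matrix_vector_mul_assoc[symmetric])
  qed
  thus "(\<forall>y. D *v y = 0 \<longrightarrow> C *v y = 0) \<and> col_space C \<subseteq> col_space D \<and> C ** B ** C = C"
    using N R by blast
qed

lemma bc:
  fixes C D :: "complex^'m^'n"
  shows "is_direct_sum (col_space D) (col_space C) (col_space (D - C))
     \<longleftrightarrow> (col_space C \<inter> col_space (D - C) = {0} \<and> col_space C \<subseteq> col_space D)"
proof
  assume h: "is_direct_sum (col_space D) (col_space C) (col_space (D - C))"
  have z: "0 \<in> col_space (D - C)" unfolding col_space_def by (auto intro: range_eqI[of _ _ 0])
  have "col_space C \<subseteq> col_space D"
  proof
    fix u assume "u \<in> col_space C"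
    hence "u + 0 \<in> {u + v |u v. u \<in> col_space C \<and> v \<in> col_space (D - C)}" using z by blast
    thus "u \<in> col_space D" using h unfolding is_direct_sum_def by simp
  qed
  thus "col_space C \<inter> col_space (D - C) = {0} \<and> col_space C \<subseteq> col_space D"
    using h unfolding is_direct_sum_def by blast
next
  assume h: "col_space C \<inter> col_space (D - C) = {0} \<and> col_space C \<subseteq> col_space D"
  have "col_space D = {u + v |u v. u \<in> col_space C \<and> v \<in> col_space (D - C)}"
  proof
    show "col_space D \<subseteq> {u + v |u v. u \<in> col_space C \<and> v \<in> col_space (D - C)}"
    proof
      fix x assume "x \<in> col_space D"
      then obtain y where y: "x = D *v y" unfolding col_space_def by blast
      have "x = C *v y + (D - C) *v y" by (simp add: y matrix_vector_mult_diff_rdistrib)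
      thus "x \<in> {u + v |u v. u \<in> col_space C \<and> v \<in> col_space (D - C)}"
        unfolding col_space_def by blast
    qed
  next
    show "{u + v |u v. u \<in> col_space C \<and> v \<in> col_space (D - C)} \<subseteq> col_space D"
    proof
      fix x assume "x \<in> {u + v |u v. u \<in> col_space C \<and> v \<in> col_space (D - C)}"
      then obtain a b where x: "x = C *v a + (D - C) *v b" unfolding col_space_def by blast
      obtain t where t: "C *v a = D *v t" using h unfolding col_space_def by blast
      obtain s where s: "C *v b = D *v s" using h unfolding col_space_def by blast
      have "x = D *v (t + b - s)"
        by (simp add: x t s matrix_vector_mult_diff_rdistrib matrix_vector_right_distrib
               matrix_vector_mult_diff_distrib)
      thus "x \<in> col_space D" unfolding col_space_def by blast
    qed
  qed
  thus "is_direct_sum (col_space D) (col_space C) (col_space (D - C))"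
    using h unfolding is_direct_sum_def by blast
qed

theorem theorem3p2:
  fixes A B :: "complex ^'n ^'m"
  shows "(diamond_le A B \<longleftrightarrow>
           is_direct_sum (col_space (conj_transpose B)) (col_space (conj_transpose A))
             (col_space (mp_inverse B - mp_inverse A)))
       \<and> (diamond_le A B \<longleftrightarrow>
           (col_space (conj_transpose A) \<inter> col_space (mp_inverse B - mp_inverse A) = {0}
            \<and> col_space (conj_transpose A) \<subseteq> col_space (conj_transpose B)))"
proof -
  define C where "C = mp_inverse A"
  define D where "D = mp_inverse B"
  have pA: "penrose A C" and pB: "penrose B D" using mp_pen C_def D_def by auto
  note p = pen_ids[OF pA] and q = pen_ids[OF pB]
  have csA: "col_space (ct A) = col_space C"
    using cs_sub[OF p(3)[unfolded matrix_mul_assoc[symmetric]]]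
          cs_sub[OF p(2)[unfolded matrix_mul_assoc[symmetric]]] by blast
  have csB: "col_space (ct B) = col_space D"
    using cs_sub[OF q(3)[unfolded matrix_mul_assoc[symmetric]]]
          cs_sub[OF q(2)[unfolded matrix_mul_assoc[symmetric]]] by blast
  have a: "diamond_le A B \<longleftrightarrow>
     ((\<forall>y. D *v y = 0 \<longrightarrow> C *v y = 0) \<and> col_space C \<subseteq> col_space D \<and> C ** B ** C = C)"
    unfolding diamond_le_def using range_iff[OF pA pB] third_iff[OF pA, of B] csA csB by auto
  show ?thesis
    unfolding C_def[symmetric] D_def[symmetric] csA csB a core[OF q(8)] bc by blast
qed

end
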